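(* Define the sequence $(y_k)_{k\ge1}$ by $y_1=1$ and $y_{k+1}=y_k+y_k^{1/3}$ for $k\ge1$. For any fixed real number $\alpha>\frac23$, we have $\sum_{k=1}^\infty y_k^{-\alpha}\ll 1$, i.e. the series converges and is bounded by a constant depending only on $\alpha$. *)

theory Defs
  imports Complex_Main
begin

text \<open>The sequence y_1 = 1, y_(k+1) = y_k + y_k^(1/3). We index from 0:
  yseq k corresponds to y_(k+1).\<close>
fun yseq :: "nat \<Rightarrow> real" where
  "yseq 0 = 1"
| "yseq (Suc k) = yseq k + yseq k powr (1/3)"

end

theory Submission
  imports Defs "HOL-Analysis.Summation_Tests"
begin

lemma yseq_pos: "yseq k \<ge> 1"
proof (induction k)
  case (Suc k)
  then show ?case by (simp add: add_increasing2)
qed simp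

lemma cube_root: "x > 0 \<Longrightarrow> (x powr (1/3)) ^ 3 = (x::real)"
  by (simp add: powr_realpow [symmetric] powr_powr)

lemma key_ineq:
  fixes s u :: real
  assumes "s \<ge> 1" "s \<ge> u" "u \<ge> 0"
  shows "(u + 1/3) ^ 3 \<le> s * (s + 1) ^ 2"
proof -
  have "(u + 1/3) ^ 3 \<le> (s + 1/3) ^ 3"
    using assms by (intro power_mono) auto
  also have "\<dots> \<le> s * (s + 1) ^ 2"
  proof -
    have e1: "(s + 1/3) ^ 3 = s^3 + s^2 + s/3 + 1/27"
      by (simp add: power2_eq_square power3_eq_cube field_simps)
    have e2: "s * (s + 1) ^ 2 = s^3 + 2 * s^2 + s"
      by (simp add: power2_eq_square power3_eq_cube algebra_simps)
    have "s^2 \<ge> 0" by simp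
    then show ?thesis unfolding e1 e2 using assms by linarith
  qed
  finally show ?thesis .
qed

lemma growth: "(yseq k powr (1/3)) ^ 2 \<ge> real k / 3"
proof (induction k)
  case 0
  then show ?case by simp
next
  case (Suc k)
  define t where "t = yseq k powr (1/3)"
  define t' where "t' = yseq (Suc k) powr (1/3)"
  have y1: "yseq k \<ge> 1" "yseq (Suc k) \<ge> 1" using yseq_pos[of k] yseq_pos[of "Suc k"] by blast+
  have t3: "t ^ 3 = yseq k" unfolding t_def using y1 cube_root by auto
  have t'3: "t' ^ 3 = yseq (Suc k)" unfolding t'_def using y1 cube_root by auto
  have tpos: "t \<ge> 1" unfolding t_def using y1 by (simp add: ge_one_powr_ge_zero)
  have t'pos: "t' \<ge> 0" unfolding t'_def by simp
  have rec: "t' ^ 3 = t ^ 3 + t" using t'3 t3 by (simp add: t_def)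
  have s1: "t^2 \<ge> 1" using tpos by (simp add: one_le_power)
  have IH: "t^2 \<ge> real k / 3" using Suc.IH t_def by simp
  have "(real k / 3 + 1/3) ^ 3 \<le> t^2 * (t^2 + 1) ^ 2"
    using key_ineq[OF s1 IH] by simp
  also have "t^2 * (t^2 + 1) ^ 2 = (t'^2) ^ 3"
  proof -
    have "(t'^2)^3 = (t'^3)^2" by (simp flip: power_mult add: mult.commute)
    also have "\<dots> = (t^3 + t)^2" using rec by simp
    also have "\<dots> = t^2 * (t^2 + 1) ^ 2" by (simp add: power2_eq_square power3_eq_cube algebra_simps)
    finally show ?thesis by simp
  qed
  finally have "(real k / 3 + 1/3) ^ 3 \<le> (t'^2) ^ 3" .
  then have "real k / 3 + 1/3 \<le> t'^2"
    using power_mono_iff[of "real k / 3 + 1/3" "t'^2" 3] by simp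
  then show ?case by (simp add: t'_def add_divide_distrib)
qed

theorem lemma3p1:
  fixes \<alpha> :: real
  assumes "\<alpha> > 2/3"
  shows "summable (\<lambda>k. yseq k powr (-\<alpha>))"
proof -
  have S: "summable (\<lambda>k. 3 powr (3*\<alpha>/2) * real k powr (-(3*\<alpha>/2)))"
    using assms by (intro summable_mult) (simp add: summable_real_powr_iff)
  show ?thesis
  proof (rule summable_comparison_test'[OF S, of 1])
    fix k :: nat assume k: "k \<ge> 1"
    define t where "t = yseq k powr (1/3)"
    have y1: "yseq k \<ge> 1" using yseq_pos by auto
    have tpos: "t > 0" unfolding t_def using y1 by simp
    have t3: "yseq k = t powr 3" unfolding t_def using y1 cube_root[of "yseq k"] tpos
      by (simp add: powr_realpow t_def)
    have g: "t powr 2 \<ge> real k / 3" using growth[of k] tpos by (simp add: t_def powr_realpow)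
    have "yseq k powr (-\<alpha>) = t powr (3 * (-\<alpha>))"
      unfolding t3 by (simp add: powr_powr)
    also have "\<dots> = (t powr 2) powr (-(3*\<alpha>/2))"
      by (simp add: powr_powr)
    also have "\<dots> \<le> (real k / 3) powr (-(3*\<alpha>/2))"
      using g k assms by (intro powr_mono2') auto
    also have "\<dots> = 3 powr (3*\<alpha>/2) * real k powr (-(3*\<alpha>/2))"
      by (simp add: powr_divide powr_minus divide_simps)
    finally show "norm (yseq k powr (-\<alpha>)) \<le> 3 powr (3*\<alpha>/2) * real k powr (-(3*\<alpha>/2))"
      by simp
  qed
qed

end
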